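(* If the toric algebra $A_{\mathscr{E}}$ is consistent, then $x^{\operatorname{div}(a)}$ divides $\prod_{\rho\in\sigma(1)}x_\rho$ for every arrow $a\in Q_1$.
   Context: Let $\mathbb{k}$ be an algebraically closed field and $X=\operatorname{Spec}R$ a normal affine toric variety of dimension $n$ with a torus-fixed point, $R=\mathbb{k}[\sigma^\vee\cap M]$, $\sigma\subset N\otimes\mathbb{R}$ strongly convex rational polyhedral. Let $\sigma(1)$ be the rays, $d=|\sigma(1)|$, $v_\rho$ primitive generators, $D_\rho$ toric prime divisors, torus-invariant divisors identified with $\mathbb{Z}^d$, $\deg:\mathbb{Z}^d\to\operatorname{Cl}(X)$ the class map with kernel the image of $M$ under $u\mapsto\sum\langle u,v_\rho\rangle D_\rho$. Cox ring $\mathbb{k}[x_\rho]$, $x^D=\prod x_\rho^{D_\rho}$. Assume $X$ is Gorenstein: $(1,\dots,1)\in\mathbb{Z}^d$ lies in the image of $M$. Let $\mathscr{E}=(E_0=\mathcal{O}_X,E_1,\dots,E_r)$ be pairwise distinct rank one reflexive sheaves, $E_i=\mathcal{O}_X(D_i')$, and $Q$ its quiver of sections: vertices $0,\dots,r$; an arrow $a:i\to j$ with label $\operatorname{div}(a)\in\mathbb{N}^d$ for each irreducible $T_M$-invariant section $x^{\operatorname{div}(a)}$ of $\operatorname{Hom}(E_i,E_j)\cong H^0(\mathcal{O}_X(D_j'-D_i'))$ (irreducible: not in the image of multiplication through any $E_k$, $k\neq i,j$). Paths compose right to left; $\operatorname{div}(p)$ is the sum of labels of arrows of $p$. $J_{\mathscr{E}}$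 is generated by $p^+-p^-$ over pairs of paths with equal head, tail and label; $A_{\mathscr{E}}=\mathbb{k}Q/J_{\mathscr{E}}$. A cycle $p$ is anticanonical if $x^{\operatorname{div}(p)}=\prod_\rho x_\rho$. For a path $q$, $\partial_qW$ is the sum of all paths $p$ with $\mathsf{t}(p)=\mathsf{h}(q)$, $\mathsf{h}(p)=\mathsf{t}(q)$, $x^{\operatorname{div}(p)}=\prod_\rho x_\rho/x^{\operatorname{div}(q)}$. $\mathscr{P}$ is the set of paths $q$ with $\partial_qW$ a sum of precisely two paths sharing neither initial nor final arrow; $J_W$ is generated by $p^+-p^-$ whenever $\partial_qW=p^++p^-$, $q\in\mathscr{P}$. $A_{\mathscr{E}}$ is consistent if $J_W=J_{\mathscr{E}}$. *)

theory Defs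
  imports Complex_Main "HOL-Computational_Algebra.Polynomial"
begin

(* N = M = Z^n, vectors are functions nat => int read on indices < n.
   Rays rho < d with primitive generators  v rho :: nat => int.
   Torus-invariant divisors = Z^d  (functions nat => int read on rho < d).
   Labels in N^d = functions nat => nat vanishing at rho >= d. *)

type_synonym label = "nat \<Rightarrow> nat"
type_synonym arrow = "nat \<times> nat \<times> label"   (* (tail, head, label) *)
type_synonym path  = "nat \<times> arrow list"       (* (tail vertex, arrows in order of traversal) *)

definition pairing :: "nat \<Rightarrow> (nat \<Rightarrow> nat \<Rightarrow> int) \<Rightarrow> (nat \<Rightarrow> int) \<Rightarrow> nat \<Rightarrow> int" where
  "pairing n v u \<rho> = (\<Sum>i<n. u i * v \<rho> i)"

(* the cone generated by the v_rho: v_rho are primitive, strongly convex, each v_rho spans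
   a ray of the cone (not in the cone of the others), and the cone is full-dimensional
   (equivalent to the existence of a torus-fixed point). *)
definition primitive_vec :: "nat \<Rightarrow> (nat \<Rightarrow> int) \<Rightarrow> bool" where
  "primitive_vec n w \<longleftrightarrow> (\<exists>i<n. w i \<noteq> 0) \<and>
     (\<forall>m::int. (\<forall>i<n. m dvd w i) \<longrightarrow> \<bar>m\<bar> = 1)"

definition toric_cone_data :: "nat \<Rightarrow> nat \<Rightarrow> (nat \<Rightarrow> nat \<Rightarrow> int) \<Rightarrow> bool" where
  "toric_cone_data n d v \<longleftrightarrow>
     (\<forall>\<rho><d. primitive_vec n (v \<rho>)) \<and>
     (\<forall>lam::nat \<Rightarrow> real. (\<forall>\<rho><d. lam \<rho> \<ge> 0) \<and> (\<forall>i<n. (\<Sum>\<rho><d. lam \<rho> * of_int (v \<rho> i)) = 0)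
          \<longrightarrow> (\<forall>\<rho><d. lam \<rho> = 0)) \<and>
     (\<forall>\<rho><d. \<not> (\<exists>\<mu>::nat \<Rightarrow> real. (\<forall>\<tau><d. \<mu> \<tau> \<ge> 0) \<and>
          (\<forall>i<n. of_int (v \<rho> i) = (\<Sum>\<tau>\<in>{..<d} - {\<rho>}. \<mu> \<tau> * of_int (v \<tau> i))))) \<and>
     (\<forall>x::nat \<Rightarrow> real. \<exists>lam::nat \<Rightarrow> real. \<forall>i<n. x i = (\<Sum>\<rho><d. lam \<rho> * of_int (v \<rho> i)))"

definition gorenstein :: "nat \<Rightarrow> nat \<Rightarrow> (nat \<Rightarrow> nat \<Rightarrow> int) \<Rightarrow> bool" where
  "gorenstein n d v \<longleftrightarrow> (\<exists>u. \<forall>\<rho><d. pairing n v u \<rho> = 1)"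

(* D has trivial class in Cl(X), i.e. D lies in the image of M *)
definition principal :: "nat \<Rightarrow> nat \<Rightarrow> (nat \<Rightarrow> nat \<Rightarrow> int) \<Rightarrow> (nat \<Rightarrow> int) \<Rightarrow> bool" where
  "principal n d v D \<longleftrightarrow> (\<exists>u. \<forall>\<rho><d. D \<rho> = pairing n v u \<rho>)"

(* labels c of T_M-invariant sections x^c of Hom(E_i,E_j) = H^0(O_X(D'_j - D'_i)) *)
definition sec_label :: "nat \<Rightarrow> nat \<Rightarrow> (nat \<Rightarrow> nat \<Rightarrow> int) \<Rightarrow> (nat \<Rightarrow> nat \<Rightarrow> int)
    \<Rightarrow> nat \<Rightarrow> nat \<Rightarrow> label \<Rightarrow> bool" where
  "sec_label n d v D' i j c \<longleftrightarrow> (\<forall>\<rho>\<ge>d. c \<rho> = 0) \<and>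
     principal n d v (\<lambda>\<rho>. int (c \<rho>) - (D' j \<rho> - D' i \<rho>))"

definition irreducible_sec :: "nat \<Rightarrow> nat \<Rightarrow> (nat \<Rightarrow> nat \<Rightarrow> int) \<Rightarrow> nat \<Rightarrow> (nat \<Rightarrow> nat \<Rightarrow> int)
    \<Rightarrow> nat \<Rightarrow> nat \<Rightarrow> label \<Rightarrow> bool" where
  "irreducible_sec n d v r D' i j c \<longleftrightarrow> sec_label n d v D' i j c \<and>
     \<not> (\<exists>k\<le>r. k \<noteq> i \<and> k \<noteq> j \<and> (\<exists>c1 c2. sec_label n d v D' i k c1 \<and> sec_label n d v D' k j c2
            \<and> (\<forall>\<rho>. c \<rho> = c1 \<rho> + c2 \<rho>)))"

(* arrows of the quiver of sections; the label 0 (identity section = trivial path) is excluded *)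
definition arrows :: "nat \<Rightarrow> nat \<Rightarrow> (nat \<Rightarrow> nat \<Rightarrow> int) \<Rightarrow> nat \<Rightarrow> (nat \<Rightarrow> nat \<Rightarrow> int) \<Rightarrow> arrow set" where
  "arrows n d v r D' = {(i, j, c). i \<le> r \<and> j \<le> r \<and> c \<noteq> (\<lambda>_. 0) \<and> irreducible_sec n d v r D' i j c}"

fun ptail :: "path \<Rightarrow> nat" where "ptail (x, as) = x"
fun phead :: "path \<Rightarrow> nat" where "phead (x, as) = (if as = [] then x else fst (snd (last as)))"
fun pdiv :: "path \<Rightarrow> label" where "pdiv (x, as) = (\<lambda>\<rho>. \<Sum>a\<leftarrow>as. snd (snd a) \<rho>)"

fun valid_path :: "nat \<Rightarrow> arrow set \<Rightarrow> path \<Rightarrow> bool" where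
  "valid_path r A (x, as) \<longleftrightarrow> x \<le> r \<and> set as \<subseteq> A \<and> (as \<noteq> [] \<longrightarrow> fst (hd as) = x) \<and>
     (\<forall>k. Suc k < length as \<longrightarrow> fst (snd (as ! k)) = fst (as ! Suc k))"

(* path algebra kQ: finitely supported coefficient functions on valid paths *)
definition path_alg :: "nat \<Rightarrow> arrow set \<Rightarrow> (path \<Rightarrow> 'k::field) set" where
  "path_alg r A = {f. finite {p. f p \<noteq> 0} \<and> (\<forall>p. f p \<noteq> 0 \<longrightarrow> valid_path r A p)}"

(* product f*g : paths compose right to left, so g's path is traversed first *)
fun pmul :: "(path \<Rightarrow> 'k::field) \<Rightarrow> (path \<Rightarrow> 'k) \<Rightarrow> path \<Rightarrow> 'k" where
  "pmul f g (x, as) = (\<Sum>k\<in>{0..length as}. f (phead (x, take k as), drop k as) * g (x, take k as))"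

definition pvec :: "path \<Rightarrow> path \<Rightarrow> 'k::field" where
  "pvec p = (\<lambda>q. if q = p then 1 else 0)"

inductive_set gen_ideal :: "nat \<Rightarrow> arrow set \<Rightarrow> (path \<Rightarrow> 'k::field) set \<Rightarrow> (path \<Rightarrow> 'k) set"
  for r A G where
  gen: "g \<in> G \<Longrightarrow> g \<in> gen_ideal r A G"
| zero: "(\<lambda>_. 0) \<in> gen_ideal r A G"
| add: "f \<in> gen_ideal r A G \<Longrightarrow> g \<in> gen_ideal r A G \<Longrightarrow> (\<lambda>p. f p + g p) \<in> gen_ideal r A G"
| lmul: "f \<in> gen_ideal r A G \<Longrightarrow> a \<in> path_alg r A \<Longrightarrow> pmul a f \<in> gen_ideal r A G"
| rmul: "f \<in> gen_ideal r A G \<Longrightarrow> a \<in> path_alg r A \<Longrightarrow> pmul f a \<in> gen_ideal r A G"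

definition JE_gens :: "nat \<Rightarrow> arrow set \<Rightarrow> (path \<Rightarrow> 'k::field) set" where
  "JE_gens r A = {(\<lambda>x. pvec p x - pvec q x) | p q. valid_path r A p \<and> valid_path r A q \<and>
      ptail p = ptail q \<and> phead p = phead q \<and> pdiv p = pdiv q}"

(* the set of paths appearing in partial_q W *)
definition dW :: "nat \<Rightarrow> nat \<Rightarrow> arrow set \<Rightarrow> path \<Rightarrow> path set" where
  "dW d r A q = {p. valid_path r A p \<and> ptail p = phead q \<and> phead p = ptail q \<and>
      (\<forall>\<rho><d. pdiv p \<rho> + pdiv q \<rho> = 1)}"

definition share_first :: "path \<Rightarrow> path \<Rightarrow> bool" where
  "share_first p q \<longleftrightarrow> snd p \<noteq> [] \<and> snd q \<noteq> [] \<and> hd (snd p) = hd (snd q)"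

definition share_last :: "path \<Rightarrow> path \<Rightarrow> bool" where
  "share_last p q \<longleftrightarrow> snd p \<noteq> [] \<and> snd q \<noteq> [] \<and> last (snd p) = last (snd q)"

definition in_P :: "nat \<Rightarrow> nat \<Rightarrow> arrow set \<Rightarrow> path \<Rightarrow> bool" where
  "in_P d r A q \<longleftrightarrow> valid_path r A q \<and>
     (\<exists>p1 p2. dW d r A q = {p1, p2} \<and> p1 \<noteq> p2 \<and> \<not> share_first p1 p2 \<and> \<not> share_last p1 p2)"

definition JW_gens :: "nat \<Rightarrow> nat \<Rightarrow> arrow set \<Rightarrow> (path \<Rightarrow> 'k::field) set" where
  "JW_gens d r A = {(\<lambda>x. pvec p1 x - pvec p2 x) | p1 p2. \<exists>q. in_P d r A q \<and> dW d r A q = {p1, p2}}"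

definition consistent :: "'k::field itself \<Rightarrow> nat \<Rightarrow> nat \<Rightarrow> (nat \<Rightarrow> nat \<Rightarrow> int) \<Rightarrow> nat
    \<Rightarrow> (nat \<Rightarrow> nat \<Rightarrow> int) \<Rightarrow> bool" where
  "consistent (TYPE('k)) n d v r D' \<longleftrightarrow>
     (let A = arrows n d v r D' in
       (gen_ideal r A (JW_gens d r A) :: (path \<Rightarrow> 'k) set) = gen_ideal r A (JE_gens r A))"

end

theory Submission
  imports Defs
begin


definition supp :: "(path \<Rightarrow> 'k::field) \<Rightarrow> path set" where "supp f = {p. f p \<noteq> 0}"
definition ssum :: "path set \<Rightarrow> (path \<Rightarrow> 'k::field) \<Rightarrow> 'k" where "ssum D f = sum f {p\<in>D. f p \<noteq> 0}"
definition cat :: "path \<Rightarrow> path \<Rightarrow> path" where "cat t s = (fst t, snd t @ snd s)"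
definition split :: "path \<Rightarrow> (path \<times> path) set" where
  "split z = {p. fst (fst p) = fst z \<and> snd (fst p) @ snd (snd p) = snd z \<and> fst (snd p) = phead (fst p)}"

lemma ssum_superset:
  assumes "finite S" "supp f \<subseteq> S"
  shows "ssum D f = sum f (D \<inter> S)"
  unfolding ssum_def
  by (rule sum.mono_neutral_left) (use assms in \<open>auto simp: supp_def\<close>)

lemma pmul_split:
  "pmul g1 g2 z = (\<Sum>p\<in>split z. g1 (snd p) * g2 (fst p))"
proof -
  obtain x as where z: "z = (x, as)" by (cases z)
  have "pmul g1 g2 z = (\<Sum>k\<in>{0..length as}. g1 (phead (x, take k as), drop k as) * g2 (x, take k as))"
    by (simp add: z)
  also have "\<dots> = (\<Sum>p\<in>split z. g1 (snd p) * g2 (fst p))"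
    apply (rule sum.reindex_bij_witness[where i = "\<lambda>p. length (snd (fst p))"
          and j = "\<lambda>k. ((x, take k as), (phead (x, take k as), drop k as))"])
    by (auto simp: split_def z)
  finally show ?thesis .
qed

lemma split_finite: "finite (split z)"
proof -
  obtain x as where z: "z = (x, as)" by (cases z)
  have "split z \<subseteq> (\<lambda>k. ((x, take k as), (phead (x, take k as), drop k as))) ` {0..length as}"
  proof
    fix p assume p: "p \<in> split z"
    obtain y t w s where pp: "p = ((y, t), (w, s))" by (metis prod.exhaust)
    have e: "y = x" "t @ s = as" "w = phead (y, t)" using p by (auto simp: split_def z pp)
    show "p \<in> (\<lambda>k. ((x, take k as), (phead (x, take k as), drop k as))) ` {0..length as}"
      unfolding image_iff
      by (rule bexI[where x="length t"]) (use e in \<open>auto simp: pp\<close>)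
  qed
  then show ?thesis by (rule finite_subset) simp
qed

lemma supp_pmul: "supp (pmul g1 g2) \<subseteq> (\<lambda>p. cat (fst p) (snd p)) ` (supp g2 \<times> supp g1)"
proof
  fix z assume "z \<in> supp (pmul g1 g2)"
  then have "(\<Sum>p\<in>split z. g1 (snd p) * g2 (fst p)) \<noteq> 0" by (simp add: supp_def pmul_split)
  then obtain p where p: "p \<in> split z" "g1 (snd p) * g2 (fst p) \<noteq> 0"
    using sum.not_neutral_contains_not_neutral by blast
  have "z = cat (fst p) (snd p)" using p(1) by (cases z) (auto simp: split_def cat_def)
  moreover have "p \<in> supp g2 \<times> supp g1" using p(2) by (cases p) (auto simp: supp_def)
  ultimately show "z \<in> (\<lambda>p. cat (fst p) (snd p)) ` (supp g2 \<times> supp g1)" by blast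
qed

lemma ssum_pmul:
  assumes f1: "finite (supp g1)" and f2: "finite (supp g2)"
  shows "ssum D (pmul g1 g2) = (\<Sum>t\<in>supp g2. \<Sum>s\<in>supp g1.
            if fst s = phead t \<and> cat t s \<in> D then g1 s * g2 t else 0)"
proof -
  define S1 where "S1 = supp g1"
  define S2 where "S2 = supp g2"
  define Z where "Z = (\<lambda>p. cat (fst p) (snd p)) ` (S2 \<times> S1)"
  define P where "P = {p \<in> S2 \<times> S1. fst (snd p) = phead (fst p) \<and> cat (fst p) (snd p) \<in> D}"
  have fZ: "finite Z" using f1 f2 by (simp add: Z_def S1_def S2_def)
  have fP: "finite P" using f1 f2 by (auto simp: P_def S1_def S2_def intro: finite_subset[of _ "S2 \<times> S1"])
  have "ssum D (pmul g1 g2) = sum (pmul g1 g2) (D \<inter> Z)"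
    by (rule ssum_superset[OF fZ]) (use supp_pmul in \<open>auto simp: Z_def S1_def S2_def\<close>)
  also have "\<dots> = (\<Sum>z\<in>D \<inter> Z. \<Sum>p\<in>{p\<in>P. cat (fst p) (snd p) = z}. g1 (snd p) * g2 (fst p))"
  proof (rule sum.cong[OF refl])
    fix z assume z: "z \<in> D \<inter> Z"
    have "pmul g1 g2 z = (\<Sum>p\<in>split z. g1 (snd p) * g2 (fst p))" by (rule pmul_split)
    also have "\<dots> = (\<Sum>p\<in>{p\<in>P. cat (fst p) (snd p) = z}. g1 (snd p) * g2 (fst p))"
    proof (rule sum.mono_neutral_right[OF split_finite])
      show "{p \<in> P. cat (fst p) (snd p) = z} \<subseteq> split z"
        by (auto simp: P_def cat_def split_def)
      show "\<forall>i\<in>split z - {p \<in> P. cat (fst p) (snd p) = z}. g1 (snd i) * g2 (fst i) = 0"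
        using z by (auto simp: P_def cat_def split_def S1_def S2_def supp_def)
    qed
    finally show "pmul g1 g2 z = (\<Sum>p\<in>{p\<in>P. cat (fst p) (snd p) = z}. g1 (snd p) * g2 (fst p))" .
  qed
  also have "\<dots> = (\<Sum>p\<in>P. g1 (snd p) * g2 (fst p))"
    by (rule sum.group[OF fP]) (use fZ in \<open>auto simp: P_def Z_def\<close>)
  also have "\<dots> = (\<Sum>p\<in>S2 \<times> S1. if fst (snd p) = phead (fst p) \<and> cat (fst p) (snd p) \<in> D
        then g1 (snd p) * g2 (fst p) else 0)"
  proof -
    have fin: "finite (S2 \<times> S1)" using f1 f2 by (simp add: S1_def S2_def)
    have "P = (S2 \<times> S1) \<inter> {p. fst (snd p) = phead (fst p) \<and> cat (fst p) (snd p) \<in> D}"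
      by (auto simp: P_def)
    then show ?thesis
      using sum.inter_restrict[OF fin, of "\<lambda>p. g1 (snd p) * g2 (fst p)"
          "{p. fst (snd p) = phead (fst p) \<and> cat (fst p) (snd p) \<in> D}"] by simp
  qed
  also have "\<dots> = (\<Sum>t\<in>S2. \<Sum>s\<in>S1. if fst s = phead t \<and> cat t s \<in> D then g1 s * g2 t else 0)"
    by (simp add: sum.cartesian_product case_prod_beta)
  finally show ?thesis by (simp add: S1_def S2_def)
qed



definition WP :: "nat \<Rightarrow> nat \<Rightarrow> arrow set \<Rightarrow> (path \<times> path) set" where
  "WP d r A = {(p1, p2). \<exists>q. in_P d r A q \<and> dW d r A q = {p1, p2}}"

definition good :: "nat \<Rightarrow> nat \<Rightarrow> arrow set \<Rightarrow> path set \<Rightarrow> bool" where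
  "good d r A D \<longleftrightarrow> (\<forall>p1 p2. (p1, p2) \<in> WP d r A \<longrightarrow>
      (\<forall>x us ws. (x, us @ snd p1 @ ws) \<in> D \<longleftrightarrow> (x, us @ snd p2 @ ws) \<in> D))"

lemma pdiv_app: "pdiv (x, as) \<rho> = (\<Sum>a\<leftarrow>as. snd (snd a) \<rho>)" by simp

lemma label_le_pdiv: "b \<in> set (snd p) \<Longrightarrow> snd (snd b) \<rho> \<le> pdiv p \<rho>"
  by (cases p) (auto intro: member_le_sum_list)

lemma dW_bound: "p \<in> dW d r A q \<Longrightarrow> \<rho> < d \<Longrightarrow> pdiv p \<rho> \<le> 1"
  unfolding dW_def by force

lemma dW_empty:
  assumes hA: "\<forall>b\<in>A. \<exists>\<rho><d. snd (snd b) \<rho> > 0"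
    and p1: "p1 \<in> dW d r A q" and p2: "p2 \<in> dW d r A q" and e: "snd p1 = []"
  shows "p1 = p2"
proof -
  obtain x1 where x1: "p1 = (x1, [])" using e by (cases p1) auto
  have q1: "\<forall>\<rho><d. pdiv q \<rho> = 1" using p1 unfolding dW_def x1 by auto
  have z: "\<forall>\<rho><d. pdiv p2 \<rho> = 0" using p2 q1 unfolding dW_def by auto
  obtain x2 as2 where x2: "p2 = (x2, as2)" by (cases p2)
  have "as2 = []"
  proof (rule ccontr)
    assume "as2 \<noteq> []"
    then have "hd as2 \<in> A" using p2 unfolding dW_def x2 by auto
    then obtain \<rho> where "\<rho> < d" "snd (snd (hd as2)) \<rho> > 0" using hA by blast
    moreover have "snd (snd (hd as2)) \<rho> \<le> pdiv p2 \<rho>"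
      by (rule label_le_pdiv) (use \<open>as2 \<noteq> []\<close> in \<open>simp add: x2\<close>)
    ultimately show False using z by force
  qed
  then show ?thesis using p1 p2 unfolding dW_def x1 x2 by auto
qed

lemma WP_props:
  assumes hA: "\<forall>b\<in>A. \<exists>\<rho><d. snd (snd b) \<rho> > 0" and w: "(p1, p2) \<in> WP d r A"
  shows "snd p1 \<noteq> [] \<and> snd p2 \<noteq> [] \<and> fst (snd (last (snd p1))) = fst (snd (last (snd p2))) \<and>
     (\<forall>b\<in>set (snd p1) \<union> set (snd p2). \<forall>\<rho><d. snd (snd b) \<rho> \<le> 1)"
proof -
  obtain q where q: "in_P d r A q" "dW d r A q = {p1, p2}" using w by (auto simp: WP_def)
  obtain a1 a2 where a: "dW d r A q = {a1, a2}" "a1 \<noteq> a2" using q(1) unfolding in_P_def by blast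
  have ne: "p1 \<noteq> p2" using a q(2) by (metis doubleton_eq_iff insert_absorb2)
  have m1: "p1 \<in> dW d r A q" and m2: "p2 \<in> dW d r A q" using q(2) by auto
  have n1: "snd p1 \<noteq> []" using dW_empty[OF hA m1 m2] ne by blast
  have n2: "snd p2 \<noteq> []" using dW_empty[OF hA m2 m1] ne by blast
  have h: "phead p1 = phead p2" using m1 m2 unfolding dW_def by auto
  have h1: "phead p1 = fst (snd (last (snd p1)))" using n1 by (cases p1) auto
  have h2: "phead p2 = fst (snd (last (snd p2)))" using n2 by (cases p2) auto
  have b: "\<forall>b\<in>set (snd p1) \<union> set (snd p2). \<forall>\<rho><d. snd (snd b) \<rho> \<le> 1"
    using label_le_pdiv dW_bound[OF m1] dW_bound[OF m2] by (meson Un_iff order_trans)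
  show ?thesis using n1 n2 h h1 h2 b by simp
qed

lemma good_gen:
  assumes "good d r A D" "(p1, p2) \<in> WP d r A"
  shows "p1 \<in> D \<longleftrightarrow> p2 \<in> D"
proof -
  have "(fst p1, [] @ snd p1 @ []) \<in> D \<longleftrightarrow> (fst p1, [] @ snd p2 @ []) \<in> D"
    using assms unfolding good_def by blast
  moreover have "fst p1 = fst p2"
  proof -
    obtain q where q: "dW d r A q = {p1, p2}" using assms(2) unfolding WP_def by blast
    then have "p1 \<in> dW d r A q" "p2 \<in> dW d r A q" by auto
    then have "ptail p1 = ptail p2" unfolding dW_def by auto
    then show ?thesis by (cases p1, cases p2) auto
  qed
  ultimately show ?thesis by (cases p1, cases p2) simp
qed

lemma good_left:
  assumes hA: "\<forall>b\<in>A. \<exists>\<rho><d. snd (snd b) \<rho> > 0" and g: "good d r A D"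
  shows "good d r A {t. fst s = phead t \<and> cat t s \<in> D}"
  unfolding good_def
proof (intro allI impI)
  fix p1 p2 x us ws assume w: "(p1, p2) \<in> WP d r A"
  note P = WP_props[OF hA w]
  have hh: "phead (x, us @ snd p1 @ ws) = phead (x, us @ snd p2 @ ws)"
    using P by (cases "ws = []") auto
  have "(x, us @ snd p1 @ (ws @ snd s)) \<in> D \<longleftrightarrow> (x, us @ snd p2 @ (ws @ snd s)) \<in> D"
    using g w unfolding good_def by blast
  then show "(x, us @ snd p1 @ ws) \<in> {t. fst s = phead t \<and> cat t s \<in> D} \<longleftrightarrow>
             (x, us @ snd p2 @ ws) \<in> {t. fst s = phead t \<and> cat t s \<in> D}"
    using hh by (simp add: cat_def)
qed

lemma good_right:
  assumes g: "good d r A D"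
  shows "good d r A {s. fst s = phead t \<and> cat t s \<in> D}"
  unfolding good_def
proof (intro allI impI)
  fix p1 p2 x us ws assume w: "(p1, p2) \<in> WP d r A"
  have "(fst t, (snd t @ us) @ snd p1 @ ws) \<in> D \<longleftrightarrow> (fst t, (snd t @ us) @ snd p2 @ ws) \<in> D"
    using g w unfolding good_def by blast
  then show "(x, us @ snd p1 @ ws) \<in> {s. fst s = phead t \<and> cat t s \<in> D} \<longleftrightarrow>
             (x, us @ snd p2 @ ws) \<in> {s. fst s = phead t \<and> cat t s \<in> D}"
    by (simp add: cat_def)
qed

lemma finite_supp_sum: "finite (supp f) \<Longrightarrow> finite (supp g) \<Longrightarrow> finite (supp (\<lambda>p. f p + g p))"
  by (rule finite_subset[of _ "supp f \<union> supp g"]) (auto simp: supp_def)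

lemma JW_inv:
  assumes hA: "\<forall>b\<in>A. \<exists>\<rho><d. snd (snd b) \<rho> > 0"
    and f: "(f :: path \<Rightarrow> 'k::field) \<in> gen_ideal r A (JW_gens d r A)"
  shows "finite (supp f) \<and> (\<forall>D. good d r A D \<longrightarrow> ssum D f = 0)"
  using f
proof (induction rule: gen_ideal.induct)
  case (gen g)
  then obtain p1 p2 where g: "g = (\<lambda>x. pvec p1 x - pvec p2 x)" "(p1, p2) \<in> WP d r A"
    unfolding JW_gens_def WP_def by blast
  have fs: "supp g \<subseteq> {p1, p2}" by (auto simp: supp_def g pvec_def)
  have fin: "finite (supp g)" using fs by (rule finite_subset) simp
  show ?case
  proof (intro conjI allI impI fin)
    fix D assume "good d r A D"
    then have e: "p1 \<in> D \<longleftrightarrow> p2 \<in> D" using good_gen g(2) by blast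
    have "ssum D g = sum g (D \<inter> {p1, p2})" by (rule ssum_superset[OF _ fs]) simp
    also have "\<dots> = 0"
    proof (cases "p1 \<in> D")
      case True
      then have "D \<inter> {p1, p2} = {p1, p2}" using e by auto
      then show ?thesis by (cases "p1 = p2") (auto simp: g pvec_def)
    next
      case False
      then have "D \<inter> {p1, p2} = {}" using e by auto
      then show ?thesis by simp
    qed
    finally show "ssum D g = 0" .
  qed
next
  case zero
  then show ?case by (simp add: supp_def ssum_def)
next
  case (add f g)
  have fin: "finite (supp (\<lambda>p. f p + g p))" using add finite_supp_sum by blast
  show ?case
  proof (intro conjI allI impI fin)
    fix D assume D: "good d r A D"
    let ?S = "supp f \<union> supp g"
    have "ssum D (\<lambda>p. f p + g p) = sum (\<lambda>p. f p + g p) (D \<inter> ?S)"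
      by (rule ssum_superset) (use add in \<open>auto simp: supp_def\<close>)
    also have "\<dots> = sum f (D \<inter> ?S) + sum g (D \<inter> ?S)" by (rule sum.distrib)
    also have "sum f (D \<inter> ?S) = ssum D f"
      by (rule ssum_superset[symmetric]) (use add in auto)
    also have "sum g (D \<inter> ?S) = ssum D g"
      by (rule ssum_superset[symmetric]) (use add in auto)
    finally show "ssum D (\<lambda>p. f p + g p) = 0" using add D by simp
  qed
next
  case (lmul f h)
  have fh: "finite (supp h)" using lmul(2) unfolding path_alg_def supp_def by auto
  have ff: "finite (supp f)" using lmul by blast
  have fin: "finite (supp (pmul h f))"
    by (rule finite_subset[OF supp_pmul]) (use fh ff in simp)
  show ?case
  proof (intro conjI allI impI fin)
    fix D assume D: "good d r A D"
    have "ssum D (pmul h f) = (\<Sum>t\<in>supp f. \<Sum>s\<in>supp h.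
            if fst s = phead t \<and> cat t s \<in> D then h s * f t else 0)"
      by (rule ssum_pmul[OF fh ff])
    also have "\<dots> = (\<Sum>s\<in>supp h. h s * (\<Sum>t\<in>supp f.
            if t \<in> {t. fst s = phead t \<and> cat t s \<in> D} then f t else 0))"
      by (subst sum.swap) (auto simp: sum_distrib_left intro!: sum.cong)
    also have "\<dots> = (\<Sum>s\<in>supp h. h s * ssum {t. fst s = phead t \<and> cat t s \<in> D} f)"
      by (intro sum.cong refl arg_cong[where f="\<lambda>x. _ * x"])
         (simp add: sum.inter_restrict[OF ff] ssum_superset[OF ff] Int_commute)
    also have "\<dots> = 0"
      using lmul.IH good_left[OF hA D] by simp
    finally show "ssum D (pmul h f) = 0" .
  qed
next
  case (rmul f h)
  have fh: "finite (supp h)" using rmul(2) unfolding path_alg_def supp_def by auto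
  have ff: "finite (supp f)" using rmul by blast
  have fin: "finite (supp (pmul f h))"
    by (rule finite_subset[OF supp_pmul]) (use fh ff in simp)
  show ?case
  proof (intro conjI allI impI fin)
    fix D assume D: "good d r A D"
    have "ssum D (pmul f h) = (\<Sum>t\<in>supp h. \<Sum>s\<in>supp f.
            if fst s = phead t \<and> cat t s \<in> D then f s * h t else 0)"
      by (rule ssum_pmul[OF ff fh])
    also have "\<dots> = (\<Sum>t\<in>supp h. h t * (\<Sum>s\<in>supp f.
            if s \<in> {s. fst s = phead t \<and> cat t s \<in> D} then f s else 0))"
      by (auto simp: sum_distrib_left mult.commute intro!: sum.cong)
    also have "\<dots> = (\<Sum>t\<in>supp h. h t * ssum {s. fst s = phead t \<and> cat t s \<in> D} f)"
      by (intro sum.cong refl arg_cong[where f="\<lambda>x. _ * x"])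
         (simp add: sum.inter_restrict[OF ff] ssum_superset[OF ff] Int_commute)
    also have "\<dots> = 0"
      using rmul.IH good_right[OF D] by simp
    finally show "ssum D (pmul f h) = 0" .
  qed
qed



lemma valid_append:
  assumes v1: "valid_path r A (x, as)" and v2: "valid_path r A (y, bs)" and h: "phead (x, as) = y"
  shows "valid_path r A (x, as @ bs)"
proof (cases "as = []")
  case True
  then show ?thesis using v2 h by simp
next
  case na: False
  show ?thesis
  proof (cases "bs = []")
    case True then show ?thesis using v1 by simp
  next
    case nb: False
    have hy: "fst (snd (last as)) = y" using h na by simp
    have hb: "fst (hd bs) = y" using v2 nb by simp
    have c1: "\<forall>k. Suc k < length as \<longrightarrow> fst (snd (as ! k)) = fst (as ! Suc k)" using v1 by simp
    have c2: "\<forall>k. Suc k < length bs \<longrightarrow> fst (snd (bs ! k)) = fst (bs ! Suc k)" using v2 by simp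
    have "\<forall>k. Suc k < length (as @ bs) \<longrightarrow> fst (snd ((as @ bs) ! k)) = fst ((as @ bs) ! Suc k)"
    proof (intro allI impI)
      fix k assume k: "Suc k < length (as @ bs)"
      consider "Suc k < length as" | "Suc k = length as" | "length as \<le> k" by linarith
      then show "fst (snd ((as @ bs) ! k)) = fst ((as @ bs) ! Suc k)"
      proof cases
        case 1 then show ?thesis using c1 by (simp add: nth_append)
      next
        case 2
        then have kk: "k = length as - 1" by simp
        then have "(as @ bs) ! k = last as" using na 2 by (simp add: nth_append last_conv_nth)
        moreover have "(as @ bs) ! Suc k = hd bs" using 2 nb by (simp add: nth_append hd_conv_nth)
        ultimately show ?thesis using hy hb by simp
      next
        case 3
        then have "Suc (k - length as) < length bs" using k by simp
        then show ?thesis using c2 3 by (simp add: nth_append Suc_diff_le)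
      qed
    qed
    then show ?thesis using v1 v2 na by auto
  qed
qed

lemma principal_neg: "principal n d v (\<lambda>\<rho>. - D \<rho>) \<Longrightarrow> principal n d v D"
proof -
  assume "principal n d v (\<lambda>\<rho>. - D \<rho>)"
  then obtain u where u: "\<forall>\<rho><d. - D \<rho> = pairing n v u \<rho>" unfolding principal_def by blast
  have "\<forall>\<rho><d. D \<rho> = pairing n v (\<lambda>i. - u i) \<rho>"
  proof (intro allI impI)
    fix \<rho> assume "\<rho> < d"
    then have "- D \<rho> = pairing n v u \<rho>" using u by blast
    then show "D \<rho> = pairing n v (\<lambda>i. - u i) \<rho>"
      unfolding pairing_def by (simp add: sum_negf)
  qed
  then show ?thesis unfolding principal_def by blast
qed

lemma sec_zero:
  assumes "sec_label n d v D' i k c1" "\<forall>\<rho><d. c1 \<rho> = 0"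
  shows "principal n d v (\<lambda>\<rho>. D' k \<rho> - D' i \<rho>)"
proof -
  have "principal n d v (\<lambda>\<rho>. int (c1 \<rho>) - (D' k \<rho> - D' i \<rho>))" using assms(1) by (simp add: sec_label_def)
  then have "principal n d v (\<lambda>\<rho>. - (D' k \<rho> - D' i \<rho>))"
    using assms(2) unfolding principal_def by auto
  then show ?thesis by (rule principal_neg)
qed

lemma realize:
  assumes distinct: "\<forall>i\<le>r. \<forall>j\<le>r. i \<noteq> j \<longrightarrow> \<not> principal n d v (\<lambda>\<rho>. D' j \<rho> - D' i \<rho>)"
  shows "i \<le> r \<Longrightarrow> j \<le> r \<Longrightarrow> sec_label n d v D' i j c \<Longrightarrow> (\<exists>\<rho><d. c \<rho> > 0) \<Longrightarrow>
    \<exists>as. valid_path r (arrows n d v r D') (i, as) \<and> as \<noteq> [] \<and> phead (i, as) = j \<and> pdiv (i, as) = c"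
proof (induction "\<Sum>\<rho><d. c \<rho>" arbitrary: i j c rule: less_induct)
  case less
  show ?case
  proof (cases "irreducible_sec n d v r D' i j c")
    case True
    have "c \<noteq> (\<lambda>_. 0)" using less.prems(4) by auto
    then have a: "(i, j, c) \<in> arrows n d v r D'" using True less.prems by (simp add: arrows_def)
    show ?thesis
      by (rule exI[where x="[(i, j, c)]"]) (use a less.prems in auto)
  next
    case False
    then obtain k c1 c2 where k: "k \<le> r" "k \<noteq> i" "k \<noteq> j" and s1: "sec_label n d v D' i k c1"
      and s2: "sec_label n d v D' k j c2" and cc: "\<forall>\<rho>. c \<rho> = c1 \<rho> + c2 \<rho>"
      using less.prems(3) unfolding irreducible_sec_def by blast
    have "\<not> (\<forall>\<rho><d. c1 \<rho> = 0)"
      using sec_zero[OF s1] distinct less.prems(1) k by metis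
    then have p1: "\<exists>\<rho><d. c1 \<rho> > 0" by (metis gr0I)
    have "\<not> (\<forall>\<rho><d. c2 \<rho> = 0)"
      using sec_zero[OF s2] distinct less.prems(2) k by metis
    then have p2: "\<exists>\<rho><d. c2 \<rho> > 0" by (metis gr0I)
    have sum: "(\<Sum>\<rho><d. c \<rho>) = (\<Sum>\<rho><d. c1 \<rho>) + (\<Sum>\<rho><d. c2 \<rho>)"
      using cc by (simp add: sum.distrib)
    have g1: "(\<Sum>\<rho><d. c1 \<rho>) > 0"
    proof -
      obtain \<rho> where "\<rho> < d" "c1 \<rho> > 0" using p1 by blast
      moreover have "c1 \<rho> \<le> (\<Sum>\<rho><d. c1 \<rho>)" by (rule member_le_sum) (use \<open>\<rho> < d\<close> in auto)
      ultimately show ?thesis by linarith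
    qed
    have g2: "(\<Sum>\<rho><d. c2 \<rho>) > 0"
    proof -
      obtain \<rho> where "\<rho> < d" "c2 \<rho> > 0" using p2 by blast
      moreover have "c2 \<rho> \<le> (\<Sum>\<rho><d. c2 \<rho>)" by (rule member_le_sum) (use \<open>\<rho> < d\<close> in auto)
      ultimately show ?thesis by linarith
    qed
    obtain as1 where a1: "valid_path r (arrows n d v r D') (i, as1)" "as1 \<noteq> []" "phead (i, as1) = k"
        "pdiv (i, as1) = c1"
      using less.hyps[of c1 i k] sum g2 less.prems(1) k s1 p1 by auto
    obtain as2 where a2: "valid_path r (arrows n d v r D') (k, as2)" "as2 \<noteq> []" "phead (k, as2) = j"
        "pdiv (k, as2) = c2"
      using less.hyps[of c2 k j] sum g1 less.prems(2) k s2 p2 by auto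
    have v: "valid_path r (arrows n d v r D') (i, as1 @ as2)" by (rule valid_append[OF a1(1) a2(1) a1(3)])
    have h: "phead (i, as1 @ as2) = j" using a2(2,3) by simp
    have pd: "pdiv (i, as1 @ as2) = c"
    proof
      fix \<rho>
      have "pdiv (i, as1 @ as2) \<rho> = pdiv (i, as1) \<rho> + pdiv (k, as2) \<rho>" by simp
      moreover have "pdiv (i, as1) \<rho> = c1 \<rho>" using a1(4) by simp
      moreover have "pdiv (k, as2) \<rho> = c2 \<rho>" using a2(4) by simp
      ultimately show "pdiv (i, as1 @ as2) \<rho> = c \<rho>" using cc by simp
    qed
    show ?thesis using v h pd a1(2) by blast
  qed
qed

lemma arrows_pos: "b \<in> arrows n d v r D' \<Longrightarrow> \<exists>\<rho><d. snd (snd b) \<rho> > 0"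
proof -
  assume b: "b \<in> arrows n d v r D'"
  obtain i j c where bb: "b = (i, j, c)" by (cases b) auto
  have "c \<noteq> (\<lambda>_. 0)" "\<forall>\<rho>\<ge>d. c \<rho> = 0"
    using b by (auto simp: bb arrows_def irreducible_sec_def sec_label_def)
  then obtain \<rho> where "c \<rho> \<noteq> 0" by auto
  then show ?thesis using \<open>\<forall>\<rho>\<ge>d. c \<rho> = 0\<close> by (auto simp: bb intro!: exI[where x=\<rho>] not_le[THEN iffD1])
qed



theorem proposition3p6:
  fixes n d r :: nat
    and v :: "nat \<Rightarrow> nat \<Rightarrow> int"
    and D' :: "nat \<Rightarrow> nat \<Rightarrow> int"
  assumes cone: "toric_cone_data n d v"
    and gor: "gorenstein n d v"
    and E0: "principal n d v (D' 0)"
    and distinct: "\<forall>i\<le>r. \<forall>j\<le>r. i \<noteq> j \<longrightarrow> \<not> principal n d v (\<lambda>\<rho>. D' j \<rho> - D' i \<rho>)"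
    and cons: "consistent TYPE('k::alg_closed_field) n d v r D'"
  shows "\<forall>a\<in>arrows n d v r D'. \<forall>\<rho><d. snd (snd a) \<rho> \<le> 1"
proof (intro ballI allI impI; rule ccontr)
  fix a \<rho> assume aA: "a \<in> arrows n d v r D'" and \<rho>: "\<rho> < d" and big: "\<not> snd (snd a) \<rho> \<le> 1"
  define A where "A = arrows n d v r D'"
  have hA: "\<forall>b\<in>A. \<exists>\<rho><d. snd (snd b) \<rho> > 0" using arrows_pos unfolding A_def by blast
  obtain i j c where a: "a = (i, j, c)" by (cases a) auto
  have ij: "i \<le> r" "j \<le> r" using aA by (auto simp: a arrows_def)
  define K where "K = (\<lambda>\<tau>::nat. if \<tau> < d then 1 else 0 :: nat)"
  obtain u where u: "\<forall>\<rho><d. pairing n v u \<rho> = 1" using gor unfolding gorenstein_def by blast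
  have secK: "sec_label n d v D' t t K" for t
    unfolding sec_label_def principal_def K_def using u by auto
  have posK: "\<exists>\<rho><d. K \<rho> > 0" using \<rho> by (auto simp: K_def)
  obtain asL where L: "valid_path r A (i, asL)" "asL \<noteq> []" "phead (i, asL) = i" "pdiv (i, asL) = K"
    using realize[OF distinct ij(1) ij(1) secK posK] unfolding A_def by blast
  obtain asR where R: "valid_path r A (j, asR)" "asR \<noteq> []" "phead (j, asR) = j" "pdiv (j, asR) = K"
    using realize[OF distinct ij(2) ij(2) secK posK] unfolding A_def by blast
  have va: "valid_path r A (i, [a])" using aA ij by (simp add: A_def a)
  define P1 where "P1 = (i, asL @ [a])"
  define P2 where "P2 = (i, a # asR)"
  have v1: "valid_path r A P1" unfolding P1_def by (rule valid_append[OF L(1) va L(3)])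
  have v2: "valid_path r A P2" unfolding P2_def
    using valid_append[OF va R(1)] by (simp add: a)
  have h1: "phead P1 = j" by (simp add: P1_def a)
  have h2: "phead P2 = j" using R(2,3) by (simp add: P2_def)
  have sL: "(\<Sum>b\<leftarrow>asL. snd (snd b) \<tau>) = K \<tau>" for \<tau> using L(4) by (metis pdiv_app)
  have sR: "(\<Sum>b\<leftarrow>asR. snd (snd b) \<tau>) = K \<tau>" for \<tau> using R(4) by (metis pdiv_app)
  have pd: "pdiv P1 = pdiv P2"
    by (rule ext) (simp add: P1_def P2_def sL sR)
  define g :: "path \<Rightarrow> 'k" where "g = (\<lambda>x. pvec P1 x - pvec P2 x)"
  have t12: "ptail P1 = ptail P2" by (simp add: P1_def P2_def)
  have "g \<in> JE_gens r A" unfolding JE_gens_def g_def mem_Collect_eq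
    apply (rule exI[where x=P1], rule exI[where x=P2])
    using v1 v2 h1 h2 pd t12 by simp
  then have "g \<in> gen_ideal r A (JE_gens r A)" by (rule gen_ideal.gen)
  then have gW: "g \<in> gen_ideal r A (JW_gens d r A)"
    using cons unfolding consistent_def Let_def A_def by simp
  define C :: "path set" where "C = {z. snd z \<noteq> [] \<and> hd (snd z) = a}"
  have notA: "b \<noteq> a" if "\<forall>\<tau><d. snd (snd b) \<tau> \<le> 1" for b
    using that \<rho> big by auto
  have goodC: "good d r A C"
    unfolding good_def
  proof (intro allI impI)
    fix p1 p2 x us ws assume w: "(p1, p2) \<in> WP d r A"
    note P = WP_props[OF hA w]
    show "(x, us @ snd p1 @ ws) \<in> C \<longleftrightarrow> (x, us @ snd p2 @ ws) \<in> C"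
    proof (cases "us = []")
      case True
      have "hd (snd p1) \<in> set (snd p1)" "hd (snd p2) \<in> set (snd p2)" using P by auto
      then have "hd (snd p1) \<noteq> a" "hd (snd p2) \<noteq> a" using P notA by auto
      then show ?thesis using True P by (simp add: C_def)
    next
      case False
      then show ?thesis by (simp add: C_def)
    qed
  qed
  have "ssum C g = 0" using JW_inv[OF hA gW] goodC by blast
  have "hd asL \<in> set asL" using L(2) by simp
  then have "\<forall>\<tau><d. snd (snd (hd asL)) \<tau> \<le> 1"
  proof (intro allI impI)
    fix \<tau> assume "\<tau> < d"
    have "snd (snd (hd asL)) \<tau> \<le> pdiv (i, asL) \<tau>" by (rule label_le_pdiv) (use L(2) in simp)
    then show "snd (snd (hd asL)) \<tau> \<le> 1" using sL[of \<tau>] \<open>\<tau> < d\<close> by (simp add: K_def)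
  qed
  then have hdL: "hd asL \<noteq> a" using notA by blast
  have n1: "P1 \<notin> C" using L(2) hdL by (simp add: C_def P1_def)
  have i2: "P2 \<in> C" by (simp add: C_def P2_def)
  have ne: "P1 \<noteq> P2" using n1 i2 by blast
  have "ssum C g = sum g (C \<inter> {P1, P2})"
    by (rule ssum_superset) (auto simp: supp_def g_def pvec_def)
  also have "C \<inter> {P1, P2} = {P2}" using n1 i2 by auto
  also have "sum g {P2} = -1" using ne by (simp add: g_def pvec_def)
  finally show False using \<open>ssum C g = 0\<close> by simp
qed

end
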